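(* Let $\Lambda=\{z\in\mathbb C:\ \operatorname{Im} z>0\}$ with the measure $d\mu(z)=\frac{da\,db}{4b^2}$ for $z=a+ib$. For $\tau\in\mathbb C$, $z\in\Lambda$, $x\in\mathbb R$ put $$K(\tau;z,x)=\left(\frac{2i(x-z)(x-\overline z)}{z-\overline z}\right)^{\tau}$$ (the base is a positive real number, and the principal branch of the power is used), and for $f\in C_c^\infty(\Lambda)$ define the Fourier transform $$Jf(\tau;x)=\int_\Lambda K(\tau;z,x)\,f(z)\,d\mu(z),\qquad \tau\in\mathbb C,\ x\in\mathbb R .$$ For a function $\Phi(\tau;x)$ on $\mathbb C\times\mathbb R$ let $T_+\Phi(\tau;x)=\Phi(\tau+1;x)$ and $T_-\Phi(\tau;x)=\Phi(\tau-1;x)$; in an expression $c(\tau)\,x^p\frac{\partial^q}{\partial x^q}T_\pm$ the shift is applied first and then the result is differentiated in $x$ and multiplied by $x^p c(\tau)$. Let $\frac{\partial}{\partial z}=\frac12\bigl(\frac{\partial}{\partial a}-i\frac{\partial}{\partial b}\bigr)$, $\frac{\partial}{\partial \overline z}=\frac12\bigl(\frac{\partial}{\partial a}+i\frac{\partial}{\partial b}\bigr)$ be the Wirtinger derivatives. Then for every $f\in C_c^\infty(\Lambda)$, every $\tau\in\mathbb C\setminus\{-1,-\tfrac12\}$ and every $x\in\mathbb R$ the following identities hold: $$J\Bigl(\tfrac{1}{z-\overline z}f\Bigr)=\Bigl[\tfrac{1}{4i(1+\tau)(1+2\tau)}\tfrac{\partial^2}{\partial x^2}T_+-\tfrac{2i\tau}{2(1+2\tau)}T_-\Bigr]Jf;$$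 $$J\Bigl(\bigl(\tfrac{\partial}{\partial z}-\tfrac{\partial}{\partial\overline z}\bigr)f\Bigr)=\Bigl[\tfrac{2+\tau}{2i(1+\tau)(1+2\tau)}\tfrac{\partial^2}{\partial x^2}T_++\tfrac{2i\tau(-1+\tau)}{1+2\tau}T_-\Bigr]Jf;$$ $$J\Bigl(\bigl(z\tfrac{\partial}{\partial z}-\overline z\tfrac{\partial}{\partial\overline z}\bigr)f\Bigr)=\Bigl[\tfrac{2+\tau}{2i(1+\tau)(1+2\tau)}x\tfrac{\partial^2}{\partial x^2}T_+-\tfrac{2+\tau}{2i(1+\tau)}\tfrac{\partial}{\partial x}T_++\tfrac{2i(-1+\tau)\tau}{1+2\tau}xT_-\Bigr]Jf;$$ $$J\Bigl(\bigl(z^2\tfrac{\partial}{\partial z}-\overline z^{\,2}\tfrac{\partial}{\partial\overline z}\bigr)f\Bigr)=\Bigl[\tfrac{2+\tau}{2i(1+\tau)(1+2\tau)}x^2\tfrac{\partial^2}{\partial x^2}T_+-\tfrac{2(2+\tau)}{2i(1+\tau)}x\tfrac{\partial}{\partial x}T_++\tfrac{2(2+\tau)}{2i}T_++\tfrac{2i\tau(-1+\tau)}{1+2\tau}x^2T_-\Bigr]Jf,$$ where both sides are evaluated at $(\tau;x)$.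
   Context: $\Lambda$ is the Lobachevsky (hyperbolic) plane realized as the upper half-plane; $\mu$ is the $\mathrm{SL}(2,\mathbb R)$-invariant measure on it. $C_c^\infty(\Lambda)$ denotes smooth compactly supported functions on $\Lambda$. The operator $\frac1{z-\overline z}$ denotes multiplication by the function $z\mapsto \frac1{z-\overline z}$. *)

theory Defs
  imports "HOL-Analysis.Analysis"
begin

definition Lobachevsky :: "complex set" where
  "Lobachevsky = {z. Im z > 0}"

definition d_a :: "(complex \<Rightarrow> complex) \<Rightarrow> complex \<Rightarrow> complex" where
  "d_a f z = vector_derivative (\<lambda>t::real. f (z + of_real t)) (at 0)"

definition d_b :: "(complex \<Rightarrow> complex) \<Rightarrow> complex \<Rightarrow> complex" where
  "d_b f z = vector_derivative (\<lambda>t::real. f (z + \<i> * of_real t)) (at 0)"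

definition wirt_z :: "(complex \<Rightarrow> complex) \<Rightarrow> complex \<Rightarrow> complex" where
  "wirt_z f z = (d_a f z - \<i> * d_b f z) / 2"

definition wirt_zbar :: "(complex \<Rightarrow> complex) \<Rightarrow> complex \<Rightarrow> complex" where
  "wirt_zbar f z = (d_a f z + \<i> * d_b f z) / 2"

text \<open>Smooth (C-infinity) functions on an open set S, regarding C as R^2:
  the greatest class of functions that are (real, Frechet) differentiable at
  every point of S, continuous on S, and whose two partial derivatives again
  belong to the class.\<close>
coinductive smooth_on :: "complex set \<Rightarrow> (complex \<Rightarrow> complex) \<Rightarrow> bool" where
  "\<lbrakk> continuous_on S f;
     \<And>z. z \<in> S \<Longrightarrow> (f has_derivative D z) (at z);
     smooth_on S (\<lambda>z. D z 1);
     smooth_on S (\<lambda>z. D z \<i>) \<rbrakk> \<Longrightarrow> smooth_on S f"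

text \<open>C_c^infinity(Lambda): smooth on Lambda, support compact and contained in Lambda
  (the function is extended by zero outside Lambda).\<close>
definition Cc_inf_Lob :: "(complex \<Rightarrow> complex) \<Rightarrow> bool" where
  "Cc_inf_Lob f \<longleftrightarrow> smooth_on Lobachevsky f \<and>
     compact (closure {z. f z \<noteq> 0}) \<and> closure {z. f z \<noteq> 0} \<subseteq> Lobachevsky"

definition kernelK :: "complex \<Rightarrow> complex \<Rightarrow> real \<Rightarrow> complex" where
  "kernelK \<tau> z x =
     (2 * \<i> * (of_real x - z) * (of_real x - cnj z) / (z - cnj z)) powr \<tau>"

definition fourierJ :: "(complex \<Rightarrow> complex) \<Rightarrow> complex \<Rightarrow> real \<Rightarrow> complex" where
  "fourierJ f \<tau> x =
     set_lebesgue_integral lborel Lobachevsky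
       (\<lambda>z. kernelK \<tau> z x * f z / (4 * (of_real (Im z))\<^sup>2))"

definition Tplus :: "(complex \<Rightarrow> real \<Rightarrow> complex) \<Rightarrow> complex \<Rightarrow> real \<Rightarrow> complex" where
  "Tplus \<Phi> \<tau> x = \<Phi> (\<tau> + 1) x"

definition Tminus :: "(complex \<Rightarrow> real \<Rightarrow> complex) \<Rightarrow> complex \<Rightarrow> real \<Rightarrow> complex" where
  "Tminus \<Phi> \<tau> x = \<Phi> (\<tau> - 1) x"

definition dx :: "(complex \<Rightarrow> real \<Rightarrow> complex) \<Rightarrow> complex \<Rightarrow> real \<Rightarrow> complex" where
  "dx \<Phi> \<tau> x = vector_derivative (\<lambda>y. \<Phi> \<tau> y) (at x)"

end

theory Submission
  imports Defs
begin


lemma open_Lob: "open Lobachevsky"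
  unfolding Lobachevsky_def by (rule open_halfspace_Im_gt)

lemma cont_local:
  fixes h :: "'a::topological_space \<Rightarrow> 'b::{topological_space,zero}"
  assumes "open A" "closed C" "C \<subseteq> A" "continuous_on A h" "\<And>x. x \<notin> C \<Longrightarrow> h x = 0"
  shows "continuous_on UNIV h"
proof -
  have "continuous_on (-C) (\<lambda>_. 0::'b)" by (rule continuous_on_const)
  then have "continuous_on (-C) h"
    by (rule continuous_on_eq) (use assms(5) in auto)
  then have "continuous_on (A \<union> -C) h"
    using assms by (intro continuous_on_open_Un) auto
  moreover have "A \<union> -C = UNIV" using assms(3) by auto
  ultimately show ?thesis by simp
qed

lemma mem_cbox_cpx: "z \<in> cbox (Complex a b) (Complex c d) \<longleftrightarrow> a \<le> Re z \<and> Re z \<le> c \<and> b \<le> Im z \<and> Im z \<le> d"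
  by (simp add: mem_box Basis_complex_def)

locale fsetup =
  fixes f :: "complex \<Rightarrow> complex" and Df :: "complex \<Rightarrow> complex \<Rightarrow> complex"
    and S :: "complex set" and R :: real
  assumes cS: "compact S" and SL: "S \<subseteq> Lobachevsky"
    and fz: "\<And>z. z \<notin> S \<Longrightarrow> f z = 0"
    and fd: "\<And>z. (f has_derivative Df z) (at z)"
    and Dc1: "continuous_on UNIV (\<lambda>z. Df z 1)"
    and Dci: "continuous_on UNIV (\<lambda>z. Df z \<i>)"
    and Dz: "\<And>z v. z \<notin> S \<Longrightarrow> Df z v = 0"
    and RS: "\<And>z. z \<in> S \<Longrightarrow> norm z \<le> R"
begin

definition "B = cbox (Complex (-(R+1)) (-(R+1))) (Complex (R+1) (R+1))"

lemma closedS: "closed S" using cS compact_imp_closed by auto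

lemma fcont: "continuous_on UNIV f"
  using fd by (meson continuous_on_eq_continuous_within has_derivative_continuous has_derivative_at_withinI)

lemma cont_mult:
  fixes k \<phi> :: "complex \<Rightarrow> complex"
  assumes "continuous_on Lobachevsky k" "continuous_on UNIV \<phi>" "\<And>z. z \<notin> S \<Longrightarrow> \<phi> z = 0"
  shows "continuous_on UNIV (\<lambda>z. k z * \<phi> z)"
  apply (rule cont_local[OF open_Lob closedS SL])
  using assms by (auto intro!: continuous_intros intro: continuous_on_subset)

lemma int_mult:
  fixes k \<phi> :: "complex \<Rightarrow> complex"
  assumes "continuous_on Lobachevsky k" "continuous_on UNIV \<phi>" "\<And>z. z \<notin> S \<Longrightarrow> \<phi> z = 0"
  shows "(\<lambda>z. k z * \<phi> z) integrable_on B"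
  unfolding B_def
  by (rule integrable_continuous, rule continuous_on_subset[OF cont_mult[OF assms]]) auto

lemma shift_in_box:
  assumes "z \<in> S" "norm c < 1"
  shows "z \<in> cbox (Complex (-(R+1)) (-(R+1)) + c) (Complex (R+1) (R+1) + c)"
proof -
  have "norm z \<le> R" using RS assms by auto
  moreover have "\<bar>Re z\<bar> \<le> norm z" "\<bar>Im z\<bar> \<le> norm z" "\<bar>Re c\<bar> \<le> norm c" "\<bar>Im c\<bar> \<le> norm c"
    by (auto simp: abs_Re_le_cmod abs_Im_le_cmod)
  ultimately show ?thesis using assms(2)
    unfolding mem_box Basis_complex_def by (auto simp: algebra_simps)
qed

lemma S_B: "z \<in> S \<Longrightarrow> z \<in> B"
  using shift_in_box[of z 0] unfolding B_def by simp

lemma integral_boxes: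
  fixes G :: "complex \<Rightarrow> complex"
  assumes "G integrable_on cbox a b" "G integrable_on cbox c d"
    "\<And>z. z \<notin> S \<Longrightarrow> G z = 0" "S \<subseteq> cbox a b" "S \<subseteq> cbox c d"
  shows "integral (cbox a b) G = integral (cbox c d) G"
proof -
  have e1: "(\<lambda>x. if x \<in> cbox a b then G x else 0) = G" "(\<lambda>x. if x \<in> cbox c d then G x else 0) = G"
    using assms(3-5) by force+
  have "(G has_integral integral (cbox a b) G) UNIV"
    using has_integral_restrict_UNIV[of "cbox a b" G] e1(1) assms(1) by (metis integrable_integral)
  moreover have "(G has_integral integral (cbox c d) G) UNIV"
    using has_integral_restrict_UNIV[of "cbox c d" G] e1(2) assms(2) by (metis integrable_integral)
  ultimately show ?thesis using has_integral_unique by blast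
qed


lemma integral_shift:
  fixes G :: "complex \<Rightarrow> complex"
  assumes "continuous_on UNIV G" "\<And>z. z \<notin> S \<Longrightarrow> G z = 0" "norm c < 1"
  shows "integral B (\<lambda>z. G (z + c)) = integral B G"
proof -
  define lo where "lo = Complex (-(R+1)) (-(R+1))"
  define hi where "hi = Complex (R+1) (R+1)"
  have Bd: "B = cbox lo hi" unfolding B_def lo_def hi_def ..
  have i1: "G integrable_on cbox (lo + c) (hi + c)"
    by (rule integrable_continuous, rule continuous_on_subset[OF assms(1)]) auto
  have "((G \<circ> (+) c) has_integral integral (cbox (lo + c) (hi + c)) G) (cbox lo hi)"
    using has_integral_shift_cbox_iff i1 by blast
  then have "integral B (\<lambda>z. G (z + c)) = integral (cbox (lo + c) (hi + c)) G"
    unfolding Bd by (simp add: o_def add.commute integral_unique)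
  also have "\<dots> = integral B G"
    unfolding Bd
    apply (rule integral_boxes[OF i1 _ assms(2)])
      apply (rule integrable_continuous, rule continuous_on_subset[OF assms(1)], simp)
    using shift_in_box assms(3) S_B unfolding lo_def hi_def B_def by auto
  finally show ?thesis .
qed

lemma ibp_zero:
  fixes G dG :: "complex \<Rightarrow> complex" and v :: complex
  assumes v: "norm v \<le> 1" and Gc: "continuous_on UNIV G" and Gz: "\<And>z. z \<notin> S \<Longrightarrow> G z = 0"
    and Gd: "\<And>z. ((\<lambda>t. G (z + of_real t * v)) has_vector_derivative dG z) (at 0)"
    and dGc: "continuous_on UNIV dG"
  shows "integral B dG = 0"
proof -
  define F where "F s = integral B (\<lambda>z. G (z + of_real s * v))" for s :: real
  have Fc: "F s = integral B G" if "s \<in> ball 0 1" for s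
  proof -
    have "norm (of_real s * v) < 1"
      using that v by (auto simp: norm_mult) (smt (verit) mult_left_le mult_nonneg_nonneg norm_ge_zero)
    then show ?thesis unfolding F_def using integral_shift[OF Gc Gz] by blast
  qed
  have "(F has_vector_derivative integral B (\<lambda>z. dG (z + of_real 0 * v))) (at 0 within UNIV)"
    unfolding F_def B_def
  proof (rule leibniz_rule_vector_derivative)
    fix s :: real and z :: complex
    define z' where "z' = z + of_real s * v"
    have d1: "((\<lambda>r. r - s) has_vector_derivative 1) (at s)"
      by (auto intro!: derivative_eq_intros)
    have d2: "((\<lambda>t. G (z' + of_real t * v)) has_vector_derivative dG z') (at ((\<lambda>r. r - s) s))"
      using Gd[of z'] by simp
    have "(((\<lambda>t. G (z' + of_real t * v)) \<circ> (\<lambda>r. r - s)) has_vector_derivative (1 *\<^sub>R dG z')) (at s)"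
      by (rule vector_diff_chain_at[OF d1 d2])
    moreover have "((\<lambda>t. G (z' + of_real t * v)) \<circ> (\<lambda>r. r - s)) = (\<lambda>r. G (z + of_real r * v))"
      unfolding z'_def by (auto simp: algebra_simps)
    ultimately show "((\<lambda>r. G (z + of_real r * v)) has_vector_derivative dG (z + of_real s * v)) (at s within UNIV)"
      unfolding z'_def by simp
  next
    fix s :: real
    show "(\<lambda>z. G (z + of_real s * v)) integrable_on cbox (Complex (- (R + 1)) (- (R + 1))) (Complex (R + 1) (R + 1))"
      by (rule integrable_continuous, rule continuous_on_compose2[OF Gc]) (auto intro!: continuous_intros)
  next
    show "continuous_on (UNIV \<times> cbox (Complex (- (R + 1)) (- (R + 1))) (Complex (R + 1) (R + 1)))
       (\<lambda>(s, z). dG (z + of_real s * v))"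
      unfolding split_beta by (rule continuous_on_compose2[OF dGc]) (auto intro!: continuous_intros)
  qed auto
  then have h1: "(F has_vector_derivative integral B dG) (at 0)" by simp
  have h2: "((\<lambda>_. integral B G) has_vector_derivative integral B dG) (at 0)"
    by (rule has_vector_derivative_transform_within_open[OF h1, of "ball 0 1"]) (auto simp: Fc)
  have h3: "((\<lambda>_. integral B G) has_vector_derivative 0) (at (0::real))"
    by (rule has_vector_derivative_const)
  show ?thesis using vector_derivative_unique_at[OF h2 h3] .
qed


lemma param_deriv:
  fixes k k' :: "real \<Rightarrow> complex \<Rightarrow> complex" and \<phi> :: "complex \<Rightarrow> complex"
  assumes kd: "\<And>y z. z \<in> Lobachevsky \<Longrightarrow> ((\<lambda>y. k y z) has_vector_derivative k' y z) (at y)"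
    and k'c: "continuous_on (UNIV \<times> Lobachevsky) (\<lambda>(y,z). k' y z)"
    and kc: "\<And>y. continuous_on Lobachevsky (k y)"
    and \<phi>c: "continuous_on UNIV \<phi>" and \<phi>z: "\<And>z. z \<notin> S \<Longrightarrow> \<phi> z = 0"
  shows "((\<lambda>y. integral B (\<lambda>z. k y z * \<phi> z)) has_vector_derivative integral B (\<lambda>z. k' y z * \<phi> z)) (at y)"
proof -
  have "((\<lambda>y. integral B (\<lambda>z. k y z * \<phi> z)) has_vector_derivative integral B (\<lambda>z. k' y z * \<phi> z)) (at y within UNIV)"
    unfolding B_def
  proof (rule leibniz_rule_vector_derivative)
    fix x :: real and z :: complex
    show "((\<lambda>x. k x z * \<phi> z) has_vector_derivative k' x z * \<phi> z) (at x within UNIV)"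
    proof (cases "z \<in> Lobachevsky")
      case True
      then show ?thesis using kd[of z x] by (auto intro!: derivative_eq_intros)
    next
      case False
      then have "\<phi> z = 0" using SL \<phi>z by auto
      then show ?thesis by simp
    qed
  next
    fix x :: real
    show "(\<lambda>z. k x z * \<phi> z) integrable_on cbox (Complex (- (R + 1)) (- (R + 1))) (Complex (R + 1) (R + 1))"
      using int_mult[OF kc \<phi>c \<phi>z] unfolding B_def .
  next
    have "continuous_on UNIV (\<lambda>(y, z). k' y z * \<phi> z)"
    proof (rule cont_local[of "UNIV \<times> Lobachevsky" "UNIV \<times> S"])
      show "continuous_on (UNIV \<times> Lobachevsky) (\<lambda>(y, z). k' y z * \<phi> z)"
        unfolding split_beta
        by (intro continuous_intros k'c[unfolded split_beta]
               continuous_on_compose2[OF \<phi>c]) auto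
    qed (use SL closedS \<phi>z open_Lob in \<open>force simp: open_Times closed_Times\<close>)+
    then show "continuous_on (UNIV \<times> cbox (Complex (- (R + 1)) (- (R + 1))) (Complex (R + 1) (R + 1)))
       (\<lambda>(x, t). k' x t * \<phi> t)" by (rule continuous_on_subset) auto
  qed auto
  then show ?thesis by simp
qed

lemma f_dir: "((\<lambda>t. f (z + of_real t * v)) has_vector_derivative Df z v) (at 0)"
proof -
  have l: "linear (Df z)" using fd[of z] has_derivative_linear by blast
  have d0: "((\<lambda>t. z + of_real t * v) has_derivative (\<lambda>t. of_real t * v)) (at 0)"
    by (auto intro!: derivative_eq_intros)
  have "((\<lambda>t. f (z + of_real t * v)) has_derivative (\<lambda>t. Df z (of_real t * v))) (at 0)"
    using has_derivative_compose[OF d0, of f "Df z"] fd[of z] by simp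
  moreover have "(\<lambda>t. Df z (of_real t * v)) = (\<lambda>t. t *\<^sub>R Df z v)"
    using l by (auto simp: scaleR_conv_of_real[symmetric] linear_scale)
  ultimately show ?thesis unfolding has_vector_derivative_def by simp
qed

lemma ibp_dir:
  fixes M dM :: "complex \<Rightarrow> complex" and v :: complex
  assumes v: "norm v \<le> 1" and Dvc: "continuous_on UNIV (\<lambda>z. Df z v)"
    and Md: "\<And>z. z \<in> Lobachevsky \<Longrightarrow> ((\<lambda>t. M (z + of_real t * v)) has_vector_derivative dM z) (at 0)"
    and Mc: "continuous_on Lobachevsky M" and dMc: "continuous_on Lobachevsky dM"
  shows "integral B (\<lambda>z. M z * Df z v) = - integral B (\<lambda>z. dM z * f z)"
proof -
  define G where "G z = M z * f z" for z
  define dG where "dG z = dM z * f z + M z * Df z v" for z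
  have i1: "(\<lambda>z. dM z * f z) integrable_on B" by (rule int_mult[OF dMc fcont fz])
  have i2: "(\<lambda>z. M z * Df z v) integrable_on B" by (rule int_mult[OF Mc Dvc Dz])
  have "integral B dG = 0"
  proof (rule ibp_zero[OF v])
    show "continuous_on UNIV G" unfolding G_def by (rule cont_mult[OF Mc fcont fz])
    show "G z = 0" if "z \<notin> S" for z unfolding G_def using fz that by simp
    show "continuous_on UNIV dG" unfolding dG_def
      by (intro continuous_intros cont_mult[OF dMc fcont fz] cont_mult[OF Mc Dvc Dz])
    show "((\<lambda>t. G (z + of_real t * v)) has_vector_derivative dG z) (at 0)" for z
    proof (cases "z \<in> Lobachevsky")
      case True
      have "((\<lambda>t. M (z + of_real t * v) * f (z + of_real t * v)) has_vector_derivative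
              (M (z + of_real 0 * v) * Df z v + dM z * f (z + of_real 0 * v))) (at 0)"
        by (rule has_vector_derivative_mult[OF Md[OF True] f_dir])
      then show ?thesis unfolding G_def dG_def by (simp add: algebra_simps)
    next
      case False
      then have zS: "z \<notin> S" using SL by auto
      define T where "T = (\<lambda>t::real. z + of_real t * v) -` (- S)"
      have "open T" unfolding T_def
        by (rule continuous_open_vimage) (use closedS in \<open>auto intro!: continuous_intros\<close>)
      moreover have "0 \<in> T" using zS unfolding T_def by simp
      moreover have "G (z + of_real t * v) = 0" if "t \<in> T" for t
        using that fz unfolding T_def G_def by auto
      ultimately have "((\<lambda>t. G (z + of_real t * v)) has_vector_derivative 0) (at 0)"
        by (intro has_vector_derivative_transform_within_open[OF has_vector_derivative_const, of T]) auto
      moreover have "dG z = 0" unfolding dG_def using fz[OF zS] Dz[OF zS] by simp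
      ultimately show ?thesis by simp
    qed
  qed
  then show ?thesis unfolding dG_def using integral_add[OF i1 i2] by (simp add: eq_neg_iff_add_eq_0 add.commute)
qed

end


definition Qk :: "complex \<Rightarrow> real \<Rightarrow> real" where
  "Qk z y = (y - Re z)^2 + (Im z)^2"
definition Ek :: "complex \<Rightarrow> complex \<Rightarrow> real \<Rightarrow> complex" where
  "Ek s z y = exp (s * of_real (ln (Qk z y / Im z)))"
definition E1 :: "complex \<Rightarrow> complex \<Rightarrow> real \<Rightarrow> complex" where
  "E1 s z y = s * of_real (2 * (y - Re z) / Qk z y) * Ek s z y"
definition E2 :: "complex \<Rightarrow> complex \<Rightarrow> real \<Rightarrow> complex" where
  "E2 s z y = s * (of_real ((2 * Qk z y - 4 * (y - Re z)^2) / (Qk z y)^2)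
      + s * (of_real (2 * (y - Re z) / Qk z y))^2) * Ek s z y"

lemma Qk_pos: "Im z > 0 \<Longrightarrow> Qk z y > 0"
  unfolding Qk_def by (simp add: add_nonneg_pos)

lemma kernel_eq:
  assumes "Im z > 0"
  shows "kernelK s z y = Ek s z y"
proof -
  have q: "(of_real y - z) * (of_real y - cnj z) = of_real (Qk z y)"
    by (simp add: complex_eq_iff Qk_def power2_eq_square algebra_simps)
  have d: "z - cnj z = 2 * \<i> * of_real (Im z)"
    by (simp add: complex_eq_iff)
  have n: "2 * \<i> * (of_real y - z) * (of_real y - cnj z) = 2 * \<i> * of_real (Qk z y)"
    by (simp add: q[symmetric] mult.assoc)
  have b: "2 * \<i> * (of_real y - z) * (of_real y - cnj z) / (z - cnj z) = of_real (Qk z y / Im z)"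
    unfolding n d using assms by (simp add: field_simps)
  have p: "Qk z y / Im z > 0" using Qk_pos[OF assms] assms by simp
  show ?thesis unfolding kernelK_def b Ek_def powr_def Ln_of_real[OF p] using p Qk_pos[OF assms, of y] assms
    by simp
qed

lemma exp_vd:
  fixes s :: complex
  assumes "(h has_real_derivative h') (at t)"
  shows "((\<lambda>t. exp (s * of_real (h t))) has_vector_derivative (s * of_real h' * exp (s * of_real (h t)))) (at t)"
proof -
  have a: "((\<lambda>t. of_real (h t) :: complex) has_vector_derivative of_real h') (at t)"
    by (rule has_vector_derivative_of_real[OF assms])
  have b: "((\<lambda>w. exp (s * w)) has_field_derivative (s * exp (s * of_real (h t)))) (at (of_real (h t)))"
    by (auto intro!: derivative_eq_intros)
  have "(((\<lambda>w. exp (s * w)) \<circ> (\<lambda>t. of_real (h t))) has_vector_derivative (of_real h' * (s * exp (s * of_real (h t))))) (at t)"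
    by (rule field_vector_diff_chain_at[OF a b])
  then show ?thesis by (simp add: o_def mult_ac)
qed

lemma Ek_dy:
  assumes "Im z > 0"
  shows "((\<lambda>y. Ek s z y) has_vector_derivative E1 s z y) (at y)"
proof -
  have Q: "Qk z y > 0" using Qk_pos[OF assms] .
  have d1: "((\<lambda>y. Qk z y / Im z) has_real_derivative (2*(y - Re z)/Im z)) (at y)"
    using assms unfolding Qk_def by (auto intro!: derivative_eq_intros simp: field_simps power2_eq_square)
  have p: "Qk z y / Im z > 0" using Q assms by simp
  have d2: "((\<lambda>y. ln (Qk z y / Im z)) has_real_derivative (inverse (Qk z y / Im z) * (2*(y - Re z)/Im z))) (at y)"
    by (rule DERIV_chain2[OF DERIV_ln[OF p] d1])
  have "inverse (Qk z y / Im z) * (2*(y - Re z)/Im z) = 2 * (y - Re z) / Qk z y"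
    using Q assms by (simp add: field_simps)
  then have "((\<lambda>y. ln (Qk z y / Im z)) has_real_derivative (2 * (y - Re z) / Qk z y)) (at y)"
    using d2 by simp
  from exp_vd[OF this, of s] show ?thesis unfolding Ek_def E1_def by (simp add: mult_ac)
qed

lemma E1_dy:
  assumes "Im z > 0"
  shows "((\<lambda>y. E1 s z y) has_vector_derivative E2 s z y) (at y)"
proof -
  have Q: "Qk z y > 0" using Qk_pos[OF assms] .
  have "((\<lambda>y. 2 * (y - Re z) / Qk z y) has_real_derivative ((2 * Qk z y - 4 * (y - Re z)^2) / (Qk z y)^2)) (at y)"
    unfolding Qk_def using Q 
    by (auto intro!: derivative_eq_intros simp: Qk_def field_simps power2_eq_square)
  then have a: "((\<lambda>y. of_real (2 * (y - Re z) / Qk z y) :: complex) has_vector_derivative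
       of_real ((2 * Qk z y - 4 * (y - Re z)^2) / (Qk z y)^2)) (at y)"
    by (rule has_vector_derivative_of_real)
  have b: "((\<lambda>y. of_real (2 * (y - Re z) / Qk z y) * Ek s z y) has_vector_derivative
     (of_real (2 * (y - Re z) / Qk z y) * E1 s z y + of_real ((2 * Qk z y - 4 * (y - Re z)^2) / (Qk z y)^2) * Ek s z y)) (at y)"
    by (rule has_vector_derivative_mult[OF a Ek_dy[OF assms]])
  have "((\<lambda>y. s * (of_real (2 * (y - Re z) / Qk z y) * Ek s z y)) has_vector_derivative
     s * (of_real (2 * (y - Re z) / Qk z y) * E1 s z y + of_real ((2 * Qk z y - 4 * (y - Re z)^2) / (Qk z y)^2) * Ek s z y)) (at y)"
    by (rule has_vector_derivative_mult_right[OF b])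
  moreover have "s * (of_real (2 * (y - Re z) / Qk z y) * E1 s z y + of_real ((2 * Qk z y - 4 * (y - Re z)^2) / (Qk z y)^2) * Ek s z y) = E2 s z y"
    unfolding E1_def E2_def by (simp only: power2_eq_square) (simp only: algebra_simps)
  ultimately show ?thesis unfolding E1_def[of s z] by (simp add: mult.assoc)
qed


lemma Lob_iff: "z \<in> Lobachevsky \<longleftrightarrow> Im z > 0" by (simp add: Lobachevsky_def)

lemma Ek_cont2: "continuous_on (UNIV \<times> Lobachevsky) (\<lambda>(y,z). Ek s z y)"
  unfolding Ek_def Qk_def split_beta
  by (intro continuous_intros) (auto simp: Lob_iff add_nonneg_pos)

lemma E1_cont2: "continuous_on (UNIV \<times> Lobachevsky) (\<lambda>(y,z). E1 s z y)"
  unfolding E1_def Ek_def Qk_def split_beta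
  by (intro continuous_intros) (auto simp: Lob_iff add_nonneg_pos)

lemma E2_cont2: "continuous_on (UNIV \<times> Lobachevsky) (\<lambda>(y,z). E2 s z y)"
  unfolding E2_def Ek_def Qk_def split_beta
  by (intro continuous_intros) (auto simp: Lob_iff add_nonneg_pos)

lemma Ek_cont: "continuous_on Lobachevsky (\<lambda>z. Ek s z y)"
  unfolding Ek_def Qk_def
  by (intro continuous_intros) (auto simp: Lob_iff add_nonneg_pos)

lemma E1_cont: "continuous_on Lobachevsky (\<lambda>z. E1 s z y)"
  unfolding E1_def Ek_def Qk_def
  by (intro continuous_intros) (auto simp: Lob_iff add_nonneg_pos)

lemma dir_gen:
  fixes \<kappa> s :: complex
  assumes "(\<psi> has_real_derivative \<psi>') (at 0)" "(\<mu> has_real_derivative \<mu>') (at 0)"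
  shows "((\<lambda>t. \<kappa> * of_real (\<mu> t) * exp (s * of_real (\<psi> t))) has_vector_derivative
     \<kappa> * (of_real \<mu>' + of_real (\<mu> 0) * s * of_real \<psi>') * exp (s * of_real (\<psi> 0))) (at 0)"
proof -
  have a: "((\<lambda>t. of_real (\<mu> t) :: complex) has_vector_derivative of_real \<mu>') (at 0)"
    by (rule has_vector_derivative_of_real[OF assms(2)])
  have b: "((\<lambda>t. of_real (\<mu> t) * exp (s * of_real (\<psi> t))) has_vector_derivative
      (of_real (\<mu> 0) * (s * of_real \<psi>' * exp (s * of_real (\<psi> 0))) + of_real \<mu>' * exp (s * of_real (\<psi> 0)))) (at 0)"
    by (rule has_vector_derivative_mult[OF a exp_vd[OF assms(1)]])
  have "((\<lambda>t. \<kappa> * (of_real (\<mu> t) * exp (s * of_real (\<psi> t)))) has_vector_derivative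
      \<kappa> * (of_real (\<mu> 0) * (s * of_real \<psi>' * exp (s * of_real (\<psi> 0))) + of_real \<mu>' * exp (s * of_real (\<psi> 0)))) (at 0)"
    by (rule has_vector_derivative_mult_right[OF b])
  then show ?thesis by (simp add: algebra_simps)
qed

lemma dir_1:
  fixes \<kappa> s :: complex
  assumes z: "Im z > 0" and mu: "(\<mu> has_real_derivative \<mu>') (at 0)"
  shows "((\<lambda>t. \<kappa> * of_real (\<mu> t) * Ek s (z + of_real t * 1) x) has_vector_derivative
     \<kappa> * (of_real \<mu>' + of_real (\<mu> 0) * s * of_real (- 2 * (x - Re z) / Qk z x)) * Ek s z x) (at 0)"
proof -
  define u where "u = x - Re z"
  define b where "b = Im z"
  have bp: "b > 0" using z b_def by simp
  have Qe: "Qk z x = u^2 + b^2" unfolding Qk_def u_def b_def ..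
  have Q: "u^2 + b^2 > 0" using Qk_pos[OF z, of x] Qe by simp
  then have Qn: "u^2 + b^2 \<noteq> 0" by linarith
  define \<psi> where "\<psi> t = ln (((u - t)^2 + b^2) / b)" for t
  have d1: "((\<lambda>t. ((u - t)^2 + b^2) / b) has_real_derivative (- 2 * u / b)) (at 0)"
    using bp by (auto intro!: derivative_eq_intros simp: field_simps power2_eq_square)
  have p: "((u - 0)^2 + b^2) / b > 0" using Q bp by simp
  have d2: "(\<psi> has_real_derivative (inverse (((u - 0)^2 + b^2) / b) * (- 2 * u / b))) (at 0)"
    unfolding \<psi>_def by (rule DERIV_chain2[OF DERIV_ln[OF p] d1])
  have "inverse (((u - 0)^2 + b^2) / b) * (- 2 * u / b) = - 2 * u / (u^2 + b^2)"
    using Qn bp by (simp add: field_simps)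
  then have d3: "(\<psi> has_real_derivative (- 2 * (x - Re z) / Qk z x)) (at 0)" using d2 Qe u_def by simp
  have e: "Ek s (z + of_real t * 1) x = exp (s * of_real (\<psi> t))" for t
    unfolding Ek_def Qk_def \<psi>_def u_def b_def by (simp add: algebra_simps)
  have e0: "exp (s * of_real (\<psi> 0)) = Ek s z x"
    unfolding Ek_def Qe \<psi>_def by (simp add: b_def)
  show ?thesis unfolding e using dir_gen[OF d3 mu, of \<kappa> s] e0 by simp
qed

lemma dir_i:
  fixes \<kappa> s :: complex
  assumes z: "Im z > 0" and mu: "(\<mu> has_real_derivative \<mu>') (at 0)"
  shows "((\<lambda>t. \<kappa> * of_real (\<mu> t) * Ek s (z + of_real t * \<i>) x) has_vector_derivative
     \<kappa> * (of_real \<mu>' + of_real (\<mu> 0) * s * of_real (((Im z)^2 - (x - Re z)^2) / (Im z * Qk z x))) * Ek s z x) (at 0)"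
proof -
  define u where "u = x - Re z"
  define b where "b = Im z"
  have bp: "b > 0" using z b_def by simp
  have Qe: "Qk z x = u^2 + b^2" unfolding Qk_def u_def b_def ..
  have Q: "u^2 + b^2 > 0" using Qk_pos[OF z, of x] Qe by simp
  then have Qn: "u^2 + b^2 \<noteq> 0" by linarith
  define \<psi> where "\<psi> t = ln ((u^2 + (b + t)^2) / (b + t))" for t
  have d1: "((\<lambda>t. (u^2 + (b + t)^2) / (b + t)) has_real_derivative ((b^2 - u^2) / b^2)) (at 0)"
    using bp by (auto intro!: derivative_eq_intros simp: field_simps power2_eq_square)
  have p: "(u^2 + (b + 0)^2) / (b + 0) > 0" using Q bp by simp
  have d2: "(\<psi> has_real_derivative (inverse ((u^2 + (b + 0)^2) / (b + 0)) * ((b^2 - u^2) / b^2))) (at 0)"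
    unfolding \<psi>_def by (rule DERIV_chain2[OF DERIV_ln[OF p] d1])
  have "inverse ((u^2 + (b + 0)^2) / (b + 0)) * ((b^2 - u^2) / b^2) = (b^2 - u^2) / (b * (u^2 + b^2))"
  proof -
    have Qn': "u*u + b*b \<noteq> 0" using Qn by (simp add: power2_eq_square)
    have "inverse ((u^2 + (b + 0)^2) / (b + 0)) = b / (u*u + b*b)" by (simp add: power2_eq_square)
    moreover have "b / Q * (y / b^2) = y / (b * Q)" if "b \<noteq> 0" for Q y :: real
      using that by (cases "Q = 0") (simp_all add: field_simps power2_eq_square)
    ultimately show ?thesis using bp by (simp add: power2_eq_square)
  qed
  then have d3: "(\<psi> has_real_derivative (((Im z)^2 - (x - Re z)^2) / (Im z * Qk z x))) (at 0)"
    using d2 Qe u_def b_def by simp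
  have e: "Ek s (z + of_real t * \<i>) x = exp (s * of_real (\<psi> t))" for t
    unfolding Ek_def Qk_def \<psi>_def u_def b_def by (simp add: algebra_simps)
  have e0: "exp (s * of_real (\<psi> 0)) = Ek s z x"
    unfolding Ek_def Qe \<psi>_def by (simp add: b_def)
  show ?thesis unfolding e using dir_gen[OF d3 mu, of \<kappa> s] e0 by simp
qed



context fsetup begin

definition W :: "complex \<Rightarrow> complex" where "W z = of_real (1 / (4 * (Im z)^2))"

lemma W_cont: "continuous_on Lobachevsky W"
  unfolding W_def by (intro continuous_intros) (auto simp: Lob_iff)

lemma W_cont2: "continuous_on (UNIV \<times> Lobachevsky) (\<lambda>x. W (snd x))"
  by (rule continuous_on_compose2[OF W_cont continuous_on_snd]) auto

lemma EW_cont: "continuous_on Lobachevsky (\<lambda>z. Ek s z y * W z)"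
  by (intro continuous_intros Ek_cont W_cont)

lemma fJ_conv:
  assumes hc: "continuous_on UNIV h" and hz: "\<And>z. z \<notin> S \<Longrightarrow> h z = 0"
  shows "fourierJ h s y = integral B (\<lambda>z. (Ek s z y * W z) * h z)"
proof -
  define G where "G z = (Ek s z y * W z) * h z" for z
  have e: "(\<lambda>z. indicator Lobachevsky z *\<^sub>R (kernelK s z y * h z / (4 * (of_real (Im z))\<^sup>2))) = G"
  proof
    fix z
    show "indicator Lobachevsky z *\<^sub>R (kernelK s z y * h z / (4 * (of_real (Im z))\<^sup>2)) = G z"
    proof (cases "z \<in> Lobachevsky")
      case True
      then have "Im z > 0" by (simp add: Lob_iff)
      then show ?thesis using True unfolding G_def W_def
        by (simp add: kernel_eq)
    next
      case False
      then have "z \<notin> S" using SL by auto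
      then show ?thesis using False hz unfolding G_def by simp
    qed
  qed
  have Gc: "continuous_on UNIV G" unfolding G_def by (rule cont_mult[OF EW_cont hc hz])
  have Gz: "G z = 0" if "z \<notin> S" for z using hz that unfolding G_def by simp
  have "(\<lambda>z. indicator S z *\<^sub>R G z) = G"
    using Gz by (auto simp: indicator_def)
  then have "integrable lborel G"
    using borel_integrable_compact[OF cS continuous_on_subset[OF Gc]] by simp
  then have h1: "(G has_integral (integral\<^sup>L lborel G)) UNIV"
    by (rule has_integral_integral_lborel)
  have "G integrable_on B" unfolding G_def by (rule int_mult[OF EW_cont hc hz])
  then have "(G has_integral integral B G) B" by (rule integrable_integral)
  then have "((\<lambda>x. if x \<in> B then G x else 0) has_integral integral B G) UNIV"
    by (simp add: has_integral_restrict_UNIV)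
  moreover have "(\<lambda>x. if x \<in> B then G x else 0) = G" using Gz S_B by force
  ultimately have h2: "(G has_integral integral B G) UNIV" by simp
  have "fourierJ h s y = integral\<^sup>L lborel G"
    unfolding fourierJ_def set_lebesgue_integral_def e ..
  also have "\<dots> = integral B G" using has_integral_unique[OF h1 h2] .
  finally show ?thesis unfolding G_def .
qed

lemma fJ_f: "fourierJ f s y = integral B (\<lambda>z. (Ek s z y * W z) * f z)"
  by (rule fJ_conv[OF fcont fz])

lemma dx1: "dx (Tplus (fourierJ f)) s y = integral B (\<lambda>z. (E1 (s+1) z y * W z) * f z)"
proof -
  have "((\<lambda>y. integral B (\<lambda>z. (Ek (s+1) z y * W z) * f z)) has_vector_derivative
         integral B (\<lambda>z. (E1 (s+1) z y * W z) * f z)) (at y)"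
  proof (rule param_deriv[OF _ _ _ fcont fz])
    show "((\<lambda>y. Ek (s + 1) z y * W z) has_vector_derivative E1 (s + 1) z y * W z) (at y)"
      if "z \<in> Lobachevsky" for y z
      using Ek_dy[of z "s+1" y] that by (auto simp: Lob_iff intro!: derivative_eq_intros)
    show "continuous_on (UNIV \<times> Lobachevsky) (\<lambda>(y, z). E1 (s + 1) z y * W z)"
      using E1_cont2[of "s+1"] W_cont unfolding split_beta
      by (intro continuous_intros W_cont2)
    show "continuous_on Lobachevsky (\<lambda>z. Ek (s + 1) z y * W z)" for y by (rule EW_cont)
  qed
  then show ?thesis unfolding dx_def Tplus_def fJ_f by (rule vector_derivative_at)
qed

lemma dx2: "dx (dx (Tplus (fourierJ f))) s y = integral B (\<lambda>z. (E2 (s+1) z y * W z) * f z)"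
proof -
  have "((\<lambda>y. integral B (\<lambda>z. (E1 (s+1) z y * W z) * f z)) has_vector_derivative
         integral B (\<lambda>z. (E2 (s+1) z y * W z) * f z)) (at y)"
  proof (rule param_deriv[OF _ _ _ fcont fz])
    show "((\<lambda>y. E1 (s + 1) z y * W z) has_vector_derivative E2 (s + 1) z y * W z) (at y)"
      if "z \<in> Lobachevsky" for y z
      using E1_dy[of z "s+1" y] that by (auto simp: Lob_iff intro!: derivative_eq_intros)
    show "continuous_on (UNIV \<times> Lobachevsky) (\<lambda>(y, z). E2 (s + 1) z y * W z)"
      using E2_cont2[of "s+1"] W_cont unfolding split_beta
      by (intro continuous_intros W_cont2)
    show "continuous_on Lobachevsky (\<lambda>z. E1 (s + 1) z y * W z)" for y
      by (intro continuous_intros E1_cont W_cont)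
  qed
  moreover have "(\<lambda>y. dx (Tplus (fourierJ f)) s y) = (\<lambda>y. integral B (\<lambda>z. (E1 (s+1) z y * W z) * f z))"
    using dx1 by auto
  ultimately show ?thesis unfolding dx_def[of "dx _"] by (simp add: vector_derivative_at)
qed

end


lemma exp_lnP: "Im z > 0 \<Longrightarrow> exp (complex_of_real (ln (Qk z y / Im z))) = of_real (Qk z y / Im z)"
  using Qk_pos[of z y] by (simp only: exp_of_real) simp

lemma Ek_plus1: "Im z > 0 \<Longrightarrow> Ek (s+1) z y = Ek s z y * of_real (Qk z y / Im z)"
  unfolding Ek_def by (simp only: distrib_right exp_add mult_1 exp_lnP)

lemma Ek_minus1: "Im z > 0 \<Longrightarrow> Ek (s-1) z y = Ek s z y / of_real (Qk z y / Im z)"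
  unfolding Ek_def by (simp only: left_diff_distrib exp_diff mult_1 exp_lnP)

lemma Qk_cpx: "(of_real (Qk z y) :: complex) = (of_real y - of_real (Re z))^2 + (of_real (Im z))^2"
  unfolding Qk_def by simp

lemma E2_cont: "continuous_on Lobachevsky (\<lambda>z. E2 s z y)"
  unfolding E2_def Ek_def Qk_def
  by (intro continuous_intros) (auto simp: Lob_iff add_nonneg_pos)

definition inv' :: "complex \<Rightarrow> complex" where "inv' = inverse"

lemma inv'_num: "2 * inv' 2 = 1" "4 * inv' 4 = 1" by (simp_all add: inv'_def)

context fsetup begin

lemma da: "d_a f z = Df z 1"
proof -
  have "((\<lambda>t. f (z + of_real t)) has_vector_derivative Df z 1) (at 0)" using f_dir[of z 1] by simp
  then show ?thesis unfolding d_a_def by (rule vector_derivative_at)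
qed

lemma db: "d_b f z = Df z \<i>"
proof -
  have "((\<lambda>t. f (z + \<i> * of_real t)) has_vector_derivative Df z \<i>) (at 0)" using f_dir[of z \<i>] by (simp add: mult.commute)
  then show ?thesis unfolding d_b_def by (rule vector_derivative_at)
qed

lemma lin2:
  assumes "continuous_on Lobachevsky k1" "continuous_on Lobachevsky k2"
  shows "integral B (\<lambda>z. (c1 * k1 z + c2 * k2 z) * f z) = c1 * integral B (\<lambda>z. k1 z * f z) + c2 * integral B (\<lambda>z. k2 z * f z)"
proof -
  have i1: "(\<lambda>z. c1 * (k1 z * f z)) integrable_on B"
    using int_mult[OF continuous_on_mult[OF continuous_on_const assms(1)] fcont fz, of c1] by (simp add: mult.assoc)
  have i2: "(\<lambda>z. c2 * (k2 z * f z)) integrable_on B"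
    using int_mult[OF continuous_on_mult[OF continuous_on_const assms(2)] fcont fz, of c2] by (simp add: mult.assoc)
  have "integral B (\<lambda>z. (c1 * k1 z + c2 * k2 z) * f z) = integral B (\<lambda>z. c1 * (k1 z * f z) + c2 * (k2 z * f z))"
    by (simp add: algebra_simps)
  also have "\<dots> = c1 * integral B (\<lambda>z. k1 z * f z) + c2 * integral B (\<lambda>z. k2 z * f z)"
    by (simp add: integral_add[OF i1 i2])
  finally show ?thesis .
qed

lemma lin3:
  assumes "continuous_on Lobachevsky k1" "continuous_on Lobachevsky k2" "continuous_on Lobachevsky k3"
  shows "integral B (\<lambda>z. (c1 * k1 z + c2 * k2 z + c3 * k3 z) * f z) = c1 * integral B (\<lambda>z. k1 z * f z) + c2 * integral B (\<lambda>z. k2 z * f z) + c3 * integral B (\<lambda>z. k3 z * f z)"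
proof -
  have c: "continuous_on Lobachevsky (\<lambda>z. c1 * k1 z + c2 * k2 z)" using assms by (intro continuous_intros)
  have "integral B (\<lambda>z. (c1 * k1 z + c2 * k2 z + c3 * k3 z) * f z) = integral B (\<lambda>z. (1 * (c1 * k1 z + c2 * k2 z) + c3 * k3 z) * f z)" by simp
  also have "\<dots> = integral B (\<lambda>z. (c1 * k1 z + c2 * k2 z) * f z) + c3 * integral B (\<lambda>z. k3 z * f z)"
    using lin2[OF c assms(3), of 1 c3] by simp
  finally show ?thesis using lin2[OF assms(1,2), of c1 c2] by simp
qed

lemma lin4:
  assumes "continuous_on Lobachevsky k1" "continuous_on Lobachevsky k2" "continuous_on Lobachevsky k3" "continuous_on Lobachevsky k4"
  shows "integral B (\<lambda>z. (c1 * k1 z + c2 * k2 z + c3 * k3 z + c4 * k4 z) * f z) = c1 * integral B (\<lambda>z. k1 z * f z) + c2 * integral B (\<lambda>z. k2 z * f z) + c3 * integral B (\<lambda>z. k3 z * f z) + c4 * integral B (\<lambda>z. k4 z * f z)"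
proof -
  have c: "continuous_on Lobachevsky (\<lambda>z. c1 * k1 z + c2 * k2 z + c3 * k3 z)" using assms by (intro continuous_intros)
  have "integral B (\<lambda>z. (c1 * k1 z + c2 * k2 z + c3 * k3 z + c4 * k4 z) * f z) = integral B (\<lambda>z. (1 * (c1 * k1 z + c2 * k2 z + c3 * k3 z) + c4 * k4 z) * f z)" by simp
  also have "\<dots> = integral B (\<lambda>z. (c1 * k1 z + c2 * k2 z + c3 * k3 z) * f z) + c4 * integral B (\<lambda>z. k4 z * f z)"
    using lin2[OF c assms(4), of 1 c4] by simp
  finally show ?thesis using lin3[OF assms(1,2,3), of c1 c2 c3] by simp
qed

lemma int_eq:
  assumes "\<And>z. z \<in> Lobachevsky \<Longrightarrow> k1 z = k2 z"
  shows "integral B (\<lambda>z. k1 z * f z) = integral B (\<lambda>z. k2 z * f z)"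
proof (rule integral_cong)
  fix z show "k1 z * f z = k2 z * f z"
    using assms[of z] fz[of z] SL by (cases "z \<in> Lobachevsky") auto
qed

lemmas push_simps = of_real_mult of_real_divide of_real_add of_real_diff of_real_power of_real_numeral
  of_real_1 of_real_0 of_real_minus divide_inverse inverse_mult_distrib inverse_inverse_eq inverse_i power2_eq_square
  power3_eq_cube of_real_inverse

theorem id1:
  assumes t1: "\<tau> \<noteq> -1" and t2: "\<tau> \<noteq> -1/2"
  shows "fourierJ (\<lambda>z. f z / (z - cnj z)) \<tau> x =
      1 / (4 * \<i> * (1 + \<tau>) * (1 + 2 * \<tau>)) * dx (dx (Tplus (fourierJ f))) \<tau> x
      - 2 * \<i> * \<tau> / (2 * (1 + 2 * \<tau>)) * Tminus (fourierJ f) \<tau> x"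
proof -
  have kc: "continuous_on Lobachevsky (\<lambda>z. 1 / (z - cnj z))"
    by (intro continuous_intros) (auto simp: Lob_iff complex_eq_iff)
  have e: "(\<lambda>z. f z / (z - cnj z)) = (\<lambda>z. (1 / (z - cnj z)) * f z)" by auto
  have hc: "continuous_on UNIV (\<lambda>z. f z / (z - cnj z))" unfolding e by (rule cont_mult[OF kc fcont fz])
  have L: "fourierJ (\<lambda>z. f z / (z - cnj z)) \<tau> x = integral B (\<lambda>z. (Ek \<tau> z x * W z / (z - cnj z)) * f z)"
    using fJ_conv[OF hc, of \<tau> x] fz by (simp add: mult_ac)
  have R: "1 / (4 * \<i> * (1 + \<tau>) * (1 + 2 * \<tau>)) * dx (dx (Tplus (fourierJ f))) \<tau> x
      - 2 * \<i> * \<tau> / (2 * (1 + 2 * \<tau>)) * Tminus (fourierJ f) \<tau> x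
    = integral B (\<lambda>z. (1 / (4 * \<i> * (1 + \<tau>) * (1 + 2 * \<tau>)) * (E2 (\<tau>+1) z x * W z)
         + (- (2 * \<i> * \<tau> / (2 * (1 + 2 * \<tau>)))) * (Ek (\<tau>-1) z x * W z)) * f z)"
    unfolding dx2 Tminus_def fJ_f
    by (subst lin2) (auto intro!: continuous_intros E2_cont Ek_cont W_cont simp: mult_ac)
  have P: "Ek \<tau> z x * W z / (z - cnj z) = 1 / (4 * \<i> * (1 + \<tau>) * (1 + 2 * \<tau>)) * (E2 (\<tau>+1) z x * W z)
         + (- (2 * \<i> * \<tau> / (2 * (1 + 2 * \<tau>)))) * (Ek (\<tau>-1) z x * W z)"
    if z: "z \<in> Lobachevsky" for z
  proof -
    have b: "Im z > 0" using z by (simp add: Lob_iff)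
    have d: "z - cnj z = 2 * \<i> * of_real (Im z)" by (simp add: complex_eq_iff)
    have h: "(of_real (Im z) :: complex) * inverse (of_real (Im z)) = 1"
      "(of_real (Qk z x) :: complex) * inverse (of_real (Qk z x)) = 1"
      "(1 + \<tau>) * inverse (1 + \<tau>) = 1" "(1 + 2 * \<tau>) * inverse (1 + 2 * \<tau>) = 1"
      "\<i> * \<i> = -1"
    proof -
      have "1 + \<tau> \<noteq> 0" using t1 by (metis add.commute add_eq_0_iff)
      moreover have "1 + 2 * \<tau> \<noteq> 0" using t2 by (auto simp: complex_eq_iff)
      ultimately show "(of_real (Im z) :: complex) * inverse (of_real (Im z)) = 1"
        "(of_real (Qk z x) :: complex) * inverse (of_real (Qk z x)) = 1"
        "(1 + \<tau>) * inverse (1 + \<tau>) = 1" "(1 + 2 * \<tau>) * inverse (1 + 2 * \<tau>) = 1"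
        "\<i> * \<i> = -1"
        using b Qk_pos[OF b, of x] by auto
    qed
    have hq: "(of_real (Qk z x) :: complex) = (of_real x - of_real (Re z))^2 + (of_real (Im z))^2"
      by (rule Qk_cpx)
    show ?thesis
      unfolding E2_def Ek_plus1[OF b] Ek_minus1[OF b] W_def d
      apply (simp only: push_simps)
      using h hq by algebra
  qed
  show ?thesis unfolding L R by (rule int_eq) (use P in auto)
qed


lemma psi1_cont: "continuous_on Lobachevsky (\<lambda>z. (of_real (- 2 * (x - Re z) / Qk z x) :: complex))"
  unfolding Qk_def by (intro continuous_intros) (auto simp: Lob_iff add_nonneg_pos)

lemma psii_cont: "continuous_on Lobachevsky (\<lambda>z. (of_real (((Im z)^2 - (x - Re z)^2) / (Im z * Qk z x)) :: complex))"
  unfolding Qk_def by (intro continuous_intros) (auto simp: Lob_iff add_nonneg_pos)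

lemma ibp_1:
  fixes m m1 :: "complex \<Rightarrow> real" and \<kappa> \<tau> :: complex
  assumes mc: "continuous_on Lobachevsky (\<lambda>z. (of_real (m z) :: complex))"
    and md: "\<And>z. Im z > 0 \<Longrightarrow> ((\<lambda>t. m (z + of_real t * 1)) has_real_derivative m1 z) (at 0)"
    and m1c: "continuous_on Lobachevsky (\<lambda>z. (of_real (m1 z) :: complex))"
  shows "integral B (\<lambda>z. (\<kappa> * of_real (m z) * Ek \<tau> z x) * Df z 1)
    = - integral B (\<lambda>z. (\<kappa> * (of_real (m1 z) + of_real (m z) * \<tau> * of_real (- 2 * (x - Re z) / Qk z x)) * Ek \<tau> z x) * f z)"
proof (rule ibp_dir[OF _ Dc1])
  show "((\<lambda>t. \<kappa> * of_real (m (z + of_real t * 1)) * Ek \<tau> (z + of_real t * 1) x) has_vector_derivative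
      \<kappa> * (of_real (m1 z) + of_real (m z) * \<tau> * of_real (- 2 * (x - Re z) / Qk z x)) * Ek \<tau> z x) (at 0)"
    if "z \<in> Lobachevsky" for z
    using dir_1[of z "\<lambda>t. m (z + of_real t * 1)" "m1 z" \<kappa> \<tau> x] md[of z] that by (simp add: Lob_iff)
  show "continuous_on Lobachevsky (\<lambda>z. \<kappa> * of_real (m z) * Ek \<tau> z x)"
    by (intro continuous_intros mc Ek_cont)
  show "continuous_on Lobachevsky (\<lambda>z. \<kappa> * (of_real (m1 z) + of_real (m z) * \<tau> * of_real (- 2 * (x - Re z) / Qk z x)) * Ek \<tau> z x)"
    by (intro continuous_intros mc m1c Ek_cont psi1_cont)
qed simp

lemma ibp_i:
  fixes m m1 :: "complex \<Rightarrow> real" and \<kappa> \<tau> :: complex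
  assumes mc: "continuous_on Lobachevsky (\<lambda>z. (of_real (m z) :: complex))"
    and md: "\<And>z. Im z > 0 \<Longrightarrow> ((\<lambda>t. m (z + of_real t * \<i>)) has_real_derivative m1 z) (at 0)"
    and m1c: "continuous_on Lobachevsky (\<lambda>z. (of_real (m1 z) :: complex))"
  shows "integral B (\<lambda>z. (\<kappa> * of_real (m z) * Ek \<tau> z x) * Df z \<i>)
    = - integral B (\<lambda>z. (\<kappa> * (of_real (m1 z) + of_real (m z) * \<tau> * of_real (((Im z)^2 - (x - Re z)^2) / (Im z * Qk z x))) * Ek \<tau> z x) * f z)"
proof (rule ibp_dir[OF _ Dci])
  show "((\<lambda>t. \<kappa> * of_real (m (z + of_real t * \<i>)) * Ek \<tau> (z + of_real t * \<i>) x) has_vector_derivative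
      \<kappa> * (of_real (m1 z) + of_real (m z) * \<tau> * of_real (((Im z)^2 - (x - Re z)^2) / (Im z * Qk z x))) * Ek \<tau> z x) (at 0)"
    if "z \<in> Lobachevsky" for z
    using dir_i[of z "\<lambda>t. m (z + of_real t * \<i>)" "m1 z" \<kappa> \<tau> x] md[of z] that by (simp add: Lob_iff)
  show "continuous_on Lobachevsky (\<lambda>z. \<kappa> * of_real (m z) * Ek \<tau> z x)"
    by (intro continuous_intros mc Ek_cont)
  show "continuous_on Lobachevsky (\<lambda>z. \<kappa> * (of_real (m1 z) + of_real (m z) * \<tau> * of_real (((Im z)^2 - (x - Re z)^2) / (Im z * Qk z x))) * Ek \<tau> z x)"
    by (intro continuous_intros mc m1c Ek_cont psii_cont)
qed simp

lemma tau_facts: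
  fixes \<tau> :: complex
  assumes t1: "\<tau> \<noteq> -1" and t2: "\<tau> \<noteq> -1/2"
  shows "(1 + \<tau>) * inverse (1 + \<tau>) = 1" "(1 + 2 * \<tau>) * inverse (1 + 2 * \<tau>) = 1"
proof -
  have "1 + \<tau> \<noteq> 0" using t1 by (metis add.commute add_eq_0_iff)
  moreover have "1 + 2 * \<tau> \<noteq> 0" using t2 by (auto simp: complex_eq_iff)
  ultimately show "(1 + \<tau>) * inverse (1 + \<tau>) = 1" "(1 + 2 * \<tau>) * inverse (1 + 2 * \<tau>) = 1" by auto
qed

lemma z_facts:
  assumes "z \<in> Lobachevsky"
  shows "(of_real (Im z) :: complex) * inverse (of_real (Im z)) = 1"
    "(of_real (Qk z x) :: complex) * inverse (of_real (Qk z x)) = 1"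
    "\<i> * \<i> = -1"
    "(of_real (Qk z x) :: complex) = (of_real x - of_real (Re z))^2 + (of_real (Im z))^2"
proof -
  have b: "Im z > 0" using assms by (simp add: Lob_iff)
  show "(of_real (Im z) :: complex) * inverse (of_real (Im z)) = 1" using b by simp
  show "(of_real (Qk z x) :: complex) * inverse (of_real (Qk z x)) = 1"
    using Qk_pos[OF b, of x] by (simp del: of_real_add of_real_power of_real_diff)
  show "\<i> * \<i> = -1" by simp
  show "(of_real (Qk z x) :: complex) = (of_real x - of_real (Re z))^2 + (of_real (Im z))^2"
    by (rule Qk_cpx)
qed

lemma Lf_cont:
  assumes "continuous_on UNIV c1" "continuous_on UNIV c2"
  shows "continuous_on UNIV (\<lambda>z. c1 z * Df z 1 + c2 z * Df z \<i>)"
  using assms by (intro continuous_intros Dc1 Dci)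

theorem id2:
  assumes t1: "\<tau> \<noteq> -1" and t2: "\<tau> \<noteq> -1/2"
  shows "fourierJ (\<lambda>z. wirt_z f z - wirt_zbar f z) \<tau> x =
      (2 + \<tau>) / (2 * \<i> * (1 + \<tau>) * (1 + 2 * \<tau>)) * dx (dx (Tplus (fourierJ f))) \<tau> x
      + 2 * \<i> * \<tau> * (-1 + \<tau>) / (1 + 2 * \<tau>) * Tminus (fourierJ f) \<tau> x"
proof -
  have Lf: "(\<lambda>z. wirt_z f z - wirt_zbar f z) = (\<lambda>z. - \<i> * Df z \<i>)"
    unfolding wirt_z_def wirt_zbar_def da db by (auto simp: field_simps)
  have hc: "continuous_on UNIV (\<lambda>z. - \<i> * Df z \<i>)" by (intro continuous_intros Dci)
  define m where "m z = 1 / (4 * (Im z)^2)" for z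
  define m1 where "m1 z = - 1 / (2 * (Im z)^3)" for z
  have mc: "continuous_on Lobachevsky (\<lambda>z. (of_real (m z) :: complex))"
    unfolding m_def by (intro continuous_intros) (auto simp: Lob_iff)
  have m1c: "continuous_on Lobachevsky (\<lambda>z. (of_real (m1 z) :: complex))"
    unfolding m1_def by (intro continuous_intros) (auto simp: Lob_iff)
  have md: "((\<lambda>t. m (z + of_real t * \<i>)) has_real_derivative m1 z) (at 0)" if "Im z > 0" for z
    unfolding m_def m1_def using that
    by (auto intro!: derivative_eq_intros simp: field_simps power2_eq_square power3_eq_cube)
  have "fourierJ (\<lambda>z. wirt_z f z - wirt_zbar f z) \<tau> x = integral B (\<lambda>z. (Ek \<tau> z x * W z) * (- \<i> * Df z \<i>))"
    unfolding Lf by (rule fJ_conv[OF hc]) (simp add: Dz)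
  also have "\<dots> = integral B (\<lambda>z. (- \<i> * of_real (m z) * Ek \<tau> z x) * Df z \<i>)"
    unfolding W_def m_def by (simp add: mult_ac)
  also have "\<dots> = - integral B (\<lambda>z. (- \<i> * (of_real (m1 z) + of_real (m z) * \<tau> * of_real (((Im z)^2 - (x - Re z)^2) / (Im z * Qk z x))) * Ek \<tau> z x) * f z)"
    by (rule ibp_i[OF mc md m1c]) 
  also have "\<dots> = integral B (\<lambda>z. (-1 * (- \<i> * (of_real (m1 z) + of_real (m z) * \<tau> * of_real (((Im z)^2 - (x - Re z)^2) / (Im z * Qk z x))) * Ek \<tau> z x)) * f z)"
    by simp
  also have "\<dots> = integral B (\<lambda>z. ((2 + \<tau>) / (2 * \<i> * (1 + \<tau>) * (1 + 2 * \<tau>)) * (E2 (\<tau>+1) z x * W z)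
         + 2 * \<i> * \<tau> * (-1 + \<tau>) / (1 + 2 * \<tau>) * (Ek (\<tau>-1) z x * W z)) * f z)"
  proof (rule int_eq)
    fix z assume z: "z \<in> Lobachevsky"
    then have b: "Im z > 0" by (simp add: Lob_iff)
    show "-1 * (- \<i> * (of_real (m1 z) + of_real (m z) * \<tau> * of_real (((Im z)^2 - (x - Re z)^2) / (Im z * Qk z x))) * Ek \<tau> z x) =
      (2 + \<tau>) / (2 * \<i> * (1 + \<tau>) * (1 + 2 * \<tau>)) * (E2 (\<tau>+1) z x * W z)
         + 2 * \<i> * \<tau> * (-1 + \<tau>) / (1 + 2 * \<tau>) * (Ek (\<tau>-1) z x * W z)"
      unfolding E2_def Ek_plus1[OF b] Ek_minus1[OF b] W_def m_def m1_def
      apply (simp only: push_simps)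
      using z_facts(1,3)[OF z] z_facts(2)[OF z, of x] z_facts(4)[OF z, of x] tau_facts[OF t1 t2] by algebra
  qed
  also have "\<dots> = (2 + \<tau>) / (2 * \<i> * (1 + \<tau>) * (1 + 2 * \<tau>)) * dx (dx (Tplus (fourierJ f))) \<tau> x
      + 2 * \<i> * \<tau> * (-1 + \<tau>) / (1 + 2 * \<tau>) * Tminus (fourierJ f) \<tau> x"
    unfolding dx2 Tminus_def fJ_f
    by (subst lin2) (auto intro!: continuous_intros E2_cont Ek_cont W_cont simp: mult_ac)
  finally show ?thesis .
qed


lemma L3_gen:
  fixes z D1 D2 :: complex
  shows "z * ((D1 - \<i> * D2) / 2) - cnj z * ((D1 + \<i> * D2) / 2) = \<i> * of_real (Im z) * D1 - \<i> * of_real (Re z) * D2"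
  by (simp add: complex_eq_iff field_simps)

lemma L4_gen:
  fixes z D1 D2 :: complex
  shows "z^2 * ((D1 - \<i> * D2) / 2) - (cnj z)^2 * ((D1 + \<i> * D2) / 2) = 2 * \<i> * of_real (Re z) * of_real (Im z) * D1 - \<i> * (of_real (Re z) ^ 2 - of_real (Im z) ^ 2) * D2"
  by (simp add: complex_eq_iff field_simps power2_eq_square)

lemma ibp_combo:
  fixes ma ma' mb mb' :: "complex \<Rightarrow> real" and \<kappa>1 \<kappa>2 \<tau> :: complex
  assumes mac: "continuous_on Lobachevsky (\<lambda>z. (of_real (ma z) :: complex))"
    and mad: "\<And>z. Im z > 0 \<Longrightarrow> ((\<lambda>t. ma (z + of_real t * 1)) has_real_derivative ma' z) (at 0)"
    and ma'c: "continuous_on Lobachevsky (\<lambda>z. (of_real (ma' z) :: complex))"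
    and mbc: "continuous_on Lobachevsky (\<lambda>z. (of_real (mb z) :: complex))"
    and mbd: "\<And>z. Im z > 0 \<Longrightarrow> ((\<lambda>t. mb (z + of_real t * \<i>)) has_real_derivative mb' z) (at 0)"
    and mb'c: "continuous_on Lobachevsky (\<lambda>z. (of_real (mb' z) :: complex))"
  shows "integral B (\<lambda>z. (\<kappa>1 * of_real (ma z) * Ek \<tau> z x) * Df z 1 + (\<kappa>2 * of_real (mb z) * Ek \<tau> z x) * Df z \<i>)
    = integral B (\<lambda>z. (-1 * (\<kappa>1 * (of_real (ma' z) + of_real (ma z) * \<tau> * of_real (- 2 * (x - Re z) / Qk z x)) * Ek \<tau> z x)
        + -1 * (\<kappa>2 * (of_real (mb' z) + of_real (mb z) * \<tau> * of_real (((Im z)^2 - (x - Re z)^2) / (Im z * Qk z x))) * Ek \<tau> z x)) * f z)"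
proof -
  have i1: "(\<lambda>z. (\<kappa>1 * of_real (ma z) * Ek \<tau> z x) * Df z 1) integrable_on B"
    by (rule int_mult[OF _ Dc1 Dz]) (intro continuous_intros mac Ek_cont)
  have i2: "(\<lambda>z. (\<kappa>2 * of_real (mb z) * Ek \<tau> z x) * Df z \<i>) integrable_on B"
    by (rule int_mult[OF _ Dci Dz]) (intro continuous_intros mbc Ek_cont)
  define dMa where "dMa z = \<kappa>1 * (of_real (ma' z) + of_real (ma z) * \<tau> * of_real (- 2 * (x - Re z) / Qk z x)) * Ek \<tau> z x" for z
  define dMb where "dMb z = \<kappa>2 * (of_real (mb' z) + of_real (mb z) * \<tau> * of_real (((Im z)^2 - (x - Re z)^2) / (Im z * Qk z x))) * Ek \<tau> z x" for z
  have c1: "continuous_on Lobachevsky dMa" unfolding dMa_def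
    by (intro continuous_intros mac ma'c Ek_cont psi1_cont)
  have c2: "continuous_on Lobachevsky dMb" unfolding dMb_def
    by (intro continuous_intros mbc mb'c Ek_cont psii_cont)
  have l: "integral B (\<lambda>z. (-1 * dMa z + -1 * dMb z) * f z) = -1 * integral B (\<lambda>z. dMa z * f z) + -1 * integral B (\<lambda>z. dMb z * f z)"
    by (rule lin2[OF c1 c2])
  have a: "integral B (\<lambda>z. (\<kappa>1 * of_real (ma z) * Ek \<tau> z x) * Df z 1) = - integral B (\<lambda>z. dMa z * f z)"
    unfolding dMa_def by (rule ibp_1[OF mac mad ma'c])
  have b: "integral B (\<lambda>z. (\<kappa>2 * of_real (mb z) * Ek \<tau> z x) * Df z \<i>) = - integral B (\<lambda>z. dMb z * f z)"
    unfolding dMb_def by (rule ibp_i[OF mbc mbd mb'c])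
  have "integral B (\<lambda>z. (\<kappa>1 * of_real (ma z) * Ek \<tau> z x) * Df z 1 + (\<kappa>2 * of_real (mb z) * Ek \<tau> z x) * Df z \<i>)
     = integral B (\<lambda>z. (-1 * dMa z + -1 * dMb z) * f z)"
    unfolding integral_add[OF i1 i2] a b l by simp
  then show ?thesis unfolding dMa_def dMb_def .
qed

theorem id3:
  assumes t1: "\<tau> \<noteq> -1" and t2: "\<tau> \<noteq> -1/2"
  shows "fourierJ (\<lambda>z. z * wirt_z f z - cnj z * wirt_zbar f z) \<tau> x =
      (2 + \<tau>) / (2 * \<i> * (1 + \<tau>) * (1 + 2 * \<tau>)) * of_real x
          * dx (dx (Tplus (fourierJ f))) \<tau> x
      - (2 + \<tau>) / (2 * \<i> * (1 + \<tau>)) * dx (Tplus (fourierJ f)) \<tau> x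
      + 2 * \<i> * (-1 + \<tau>) * \<tau> / (1 + 2 * \<tau>) * of_real x * Tminus (fourierJ f) \<tau> x"
proof -
  have Lf: "(\<lambda>z. z * wirt_z f z - cnj z * wirt_zbar f z) = (\<lambda>z. \<i> * of_real (Im z) * Df z 1 - \<i> * of_real (Re z) * Df z \<i>)"
    unfolding wirt_z_def wirt_zbar_def da db L3_gen ..
  have hc: "continuous_on UNIV (\<lambda>z. \<i> * of_real (Im z) * Df z 1 - \<i> * of_real (Re z) * Df z \<i>)"
    by (intro continuous_intros Dci Dc1)
  define ma where "ma z = 1 / (4 * Im z)" for z
  define ma' where "ma' z = (0::real)" for z :: complex
  define mb where "mb z = Re z / (4 * (Im z)^2)" for z
  define mb' where "mb' z = - Re z / (2 * (Im z)^3)" for z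
  have mac: "continuous_on Lobachevsky (\<lambda>z. (of_real (ma z) :: complex))"
    unfolding ma_def by (intro continuous_intros) (auto simp: Lob_iff)
  have ma'c: "continuous_on Lobachevsky (\<lambda>z. (of_real (ma' z) :: complex))"
    unfolding ma'_def by (intro continuous_intros)
  have mbc: "continuous_on Lobachevsky (\<lambda>z. (of_real (mb z) :: complex))"
    unfolding mb_def by (intro continuous_intros) (auto simp: Lob_iff)
  have mb'c: "continuous_on Lobachevsky (\<lambda>z. (of_real (mb' z) :: complex))"
    unfolding mb'_def by (intro continuous_intros) (auto simp: Lob_iff)
  have mad: "((\<lambda>t. ma (z + of_real t * 1)) has_real_derivative ma' z) (at 0)" if "Im z > 0" for z
    unfolding ma_def ma'_def using that by (auto intro!: derivative_eq_intros)
  have mbd: "((\<lambda>t. mb (z + of_real t * \<i>)) has_real_derivative mb' z) (at 0)" if "Im z > 0" for z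
    unfolding mb_def mb'_def using that
    by (auto intro!: derivative_eq_intros simp: field_simps power2_eq_square power3_eq_cube)
  have "fourierJ (\<lambda>z. z * wirt_z f z - cnj z * wirt_zbar f z) \<tau> x
      = integral B (\<lambda>z. (Ek \<tau> z x * W z) * (\<i> * of_real (Im z) * Df z 1 - \<i> * of_real (Re z) * Df z \<i>))"
    unfolding Lf by (rule fJ_conv[OF hc]) (simp add: Dz)
  also have "\<dots> = integral B (\<lambda>z. (\<i> * of_real (ma z) * Ek \<tau> z x) * Df z 1 + (- \<i> * of_real (mb z) * Ek \<tau> z x) * Df z \<i>)"
  proof (rule integral_cong)
    fix z
    show "(Ek \<tau> z x * W z) * (\<i> * of_real (Im z) * Df z 1 - \<i> * of_real (Re z) * Df z \<i>)
       = (\<i> * of_real (ma z) * Ek \<tau> z x) * Df z 1 + (- \<i> * of_real (mb z) * Ek \<tau> z x) * Df z \<i>"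
    proof (cases "z \<in> Lobachevsky")
      case True
      show ?thesis
        unfolding W_def ma_def mb_def
        apply (simp only: push_simps)
        using z_facts(1,3)[OF True] by algebra
    next
      case False
      then have "z \<notin> S" using SL by auto
      then show ?thesis by (simp add: Dz)
    qed
  qed
  also have "\<dots> = integral B (\<lambda>z. (-1 * (\<i> * (of_real (ma' z) + of_real (ma z) * \<tau> * of_real (- 2 * (x - Re z) / Qk z x)) * Ek \<tau> z x)
        + -1 * (- \<i> * (of_real (mb' z) + of_real (mb z) * \<tau> * of_real (((Im z)^2 - (x - Re z)^2) / (Im z * Qk z x))) * Ek \<tau> z x)) * f z)"
    by (rule ibp_combo[OF mac mad ma'c mbc mbd mb'c])
  also have "\<dots> = integral B (\<lambda>z. ((2 + \<tau>) / (2 * \<i> * (1 + \<tau>) * (1 + 2 * \<tau>)) * of_real x * (E2 (\<tau>+1) z x * W z)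
         + (- ((2 + \<tau>) / (2 * \<i> * (1 + \<tau>)))) * (E1 (\<tau>+1) z x * W z)
         + 2 * \<i> * (-1 + \<tau>) * \<tau> / (1 + 2 * \<tau>) * of_real x * (Ek (\<tau>-1) z x * W z)) * f z)"
  proof (rule int_eq)
    fix z assume z: "z \<in> Lobachevsky"
    then have b: "Im z > 0" by (simp add: Lob_iff)
    show "-1 * (\<i> * (of_real (ma' z) + of_real (ma z) * \<tau> * of_real (- 2 * (x - Re z) / Qk z x)) * Ek \<tau> z x)
        + -1 * (- \<i> * (of_real (mb' z) + of_real (mb z) * \<tau> * of_real (((Im z)^2 - (x - Re z)^2) / (Im z * Qk z x))) * Ek \<tau> z x)
      = (2 + \<tau>) / (2 * \<i> * (1 + \<tau>) * (1 + 2 * \<tau>)) * of_real x * (E2 (\<tau>+1) z x * W z)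
         + (- ((2 + \<tau>) / (2 * \<i> * (1 + \<tau>)))) * (E1 (\<tau>+1) z x * W z)
         + 2 * \<i> * (-1 + \<tau>) * \<tau> / (1 + 2 * \<tau>) * of_real x * (Ek (\<tau>-1) z x * W z)"
      unfolding E2_def E1_def Ek_plus1[OF b] Ek_minus1[OF b] W_def ma_def ma'_def mb_def mb'_def
      apply (simp only: push_simps)
      using z_facts(1,3)[OF z] z_facts(2)[OF z, of x] z_facts(4)[OF z, of x] tau_facts[OF t1 t2] by algebra
  qed
  also have "\<dots> = (2 + \<tau>) / (2 * \<i> * (1 + \<tau>) * (1 + 2 * \<tau>)) * of_real x
          * dx (dx (Tplus (fourierJ f))) \<tau> x
      - (2 + \<tau>) / (2 * \<i> * (1 + \<tau>)) * dx (Tplus (fourierJ f)) \<tau> x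
      + 2 * \<i> * (-1 + \<tau>) * \<tau> / (1 + 2 * \<tau>) * of_real x * Tminus (fourierJ f) \<tau> x"
    unfolding dx2 dx1 Tminus_def fJ_f
    by (subst lin3) (auto intro!: continuous_intros E2_cont E1_cont Ek_cont W_cont simp: mult_ac)
  finally show ?thesis .
qed


theorem id4:
  assumes t1: "\<tau> \<noteq> -1" and t2: "\<tau> \<noteq> -1/2"
  shows "fourierJ (\<lambda>z. z\<^sup>2 * wirt_z f z - (cnj z)\<^sup>2 * wirt_zbar f z) \<tau> x =
      (2 + \<tau>) / (2 * \<i> * (1 + \<tau>) * (1 + 2 * \<tau>)) * (of_real x)\<^sup>2
          * dx (dx (Tplus (fourierJ f))) \<tau> x
      - 2 * (2 + \<tau>) / (2 * \<i> * (1 + \<tau>)) * of_real x * dx (Tplus (fourierJ f)) \<tau> x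
      + 2 * (2 + \<tau>) / (2 * \<i>) * Tplus (fourierJ f) \<tau> x
      + 2 * \<i> * \<tau> * (-1 + \<tau>) / (1 + 2 * \<tau>) * (of_real x)\<^sup>2 * Tminus (fourierJ f) \<tau> x"
proof -
  have Lf: "(\<lambda>z. z\<^sup>2 * wirt_z f z - (cnj z)\<^sup>2 * wirt_zbar f z) = (\<lambda>z. 2 * \<i> * of_real (Re z) * of_real (Im z) * Df z 1 - \<i> * (of_real (Re z) ^ 2 - of_real (Im z) ^ 2) * Df z \<i>)"
    unfolding wirt_z_def wirt_zbar_def da db L4_gen ..
  have hc: "continuous_on UNIV (\<lambda>z. 2 * \<i> * of_real (Re z) * of_real (Im z) * Df z 1 - \<i> * (of_real (Re z) ^ 2 - of_real (Im z) ^ 2) * Df z \<i>)"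
    by (intro continuous_intros Dci Dc1)
  define ma where "ma z = Re z / (2 * Im z)" for z
  define ma' where "ma' z = 1 / (2 * Im z)" for z
  define mb where "mb z = ((Re z)^2 - (Im z)^2) / (4 * (Im z)^2)" for z
  define mb' where "mb' z = - ((Re z)^2) / (2 * (Im z)^3)" for z
  have mac: "continuous_on Lobachevsky (\<lambda>z. (of_real (ma z) :: complex))"
    unfolding ma_def by (intro continuous_intros) (auto simp: Lob_iff)
  have ma'c: "continuous_on Lobachevsky (\<lambda>z. (of_real (ma' z) :: complex))"
    unfolding ma'_def by (intro continuous_intros) (auto simp: Lob_iff)
  have mbc: "continuous_on Lobachevsky (\<lambda>z. (of_real (mb z) :: complex))"
    unfolding mb_def by (intro continuous_intros) (auto simp: Lob_iff)
  have mb'c: "continuous_on Lobachevsky (\<lambda>z. (of_real (mb' z) :: complex))"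
    unfolding mb'_def by (intro continuous_intros) (auto simp: Lob_iff)
  have mad: "((\<lambda>t. ma (z + of_real t * 1)) has_real_derivative ma' z) (at 0)" if "Im z > 0" for z
    unfolding ma_def ma'_def using that by (auto intro!: derivative_eq_intros simp: field_simps)
  have mbd: "((\<lambda>t. mb (z + of_real t * \<i>)) has_real_derivative mb' z) (at 0)" if "Im z > 0" for z
    unfolding mb_def mb'_def using that
    by (auto intro!: derivative_eq_intros simp: field_simps power2_eq_square power3_eq_cube)
  have "fourierJ (\<lambda>z. z\<^sup>2 * wirt_z f z - (cnj z)\<^sup>2 * wirt_zbar f z) \<tau> x
      = integral B (\<lambda>z. (Ek \<tau> z x * W z) * (2 * \<i> * of_real (Re z) * of_real (Im z) * Df z 1 - \<i> * (of_real (Re z) ^ 2 - of_real (Im z) ^ 2) * Df z \<i>))"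
    unfolding Lf by (rule fJ_conv[OF hc]) (simp add: Dz)
  also have "\<dots> = integral B (\<lambda>z. (\<i> * of_real (ma z) * Ek \<tau> z x) * Df z 1 + (- \<i> * of_real (mb z) * Ek \<tau> z x) * Df z \<i>)"
  proof (rule integral_cong)
    fix z
    show "(Ek \<tau> z x * W z) * (2 * \<i> * of_real (Re z) * of_real (Im z) * Df z 1 - \<i> * (of_real (Re z) ^ 2 - of_real (Im z) ^ 2) * Df z \<i>)
       = (\<i> * of_real (ma z) * Ek \<tau> z x) * Df z 1 + (- \<i> * of_real (mb z) * Ek \<tau> z x) * Df z \<i>"
    proof (cases "z \<in> Lobachevsky")
      case True
      show ?thesis
        unfolding W_def ma_def mb_def
        apply (simp only: push_simps)
        using z_facts(1,3)[OF True] by algebra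
    next
      case False
      then have "z \<notin> S" using SL by auto
      then show ?thesis by (simp add: Dz)
    qed
  qed
  also have "\<dots> = integral B (\<lambda>z. (-1 * (\<i> * (of_real (ma' z) + of_real (ma z) * \<tau> * of_real (- 2 * (x - Re z) / Qk z x)) * Ek \<tau> z x)
        + -1 * (- \<i> * (of_real (mb' z) + of_real (mb z) * \<tau> * of_real (((Im z)^2 - (x - Re z)^2) / (Im z * Qk z x))) * Ek \<tau> z x)) * f z)"
    by (rule ibp_combo[OF mac mad ma'c mbc mbd mb'c])
  also have "\<dots> = integral B (\<lambda>z. ((2 + \<tau>) / (2 * \<i> * (1 + \<tau>) * (1 + 2 * \<tau>)) * (of_real x)\<^sup>2 * (E2 (\<tau>+1) z x * W z)
         + (- (2 * (2 + \<tau>) / (2 * \<i> * (1 + \<tau>)) * of_real x)) * (E1 (\<tau>+1) z x * W z)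
         + 2 * (2 + \<tau>) / (2 * \<i>) * (Ek (\<tau>+1) z x * W z)
         + 2 * \<i> * \<tau> * (-1 + \<tau>) / (1 + 2 * \<tau>) * (of_real x)\<^sup>2 * (Ek (\<tau>-1) z x * W z)) * f z)"
  proof (rule int_eq)
    fix z assume z: "z \<in> Lobachevsky"
    then have b: "Im z > 0" by (simp add: Lob_iff)
    show "-1 * (\<i> * (of_real (ma' z) + of_real (ma z) * \<tau> * of_real (- 2 * (x - Re z) / Qk z x)) * Ek \<tau> z x)
        + -1 * (- \<i> * (of_real (mb' z) + of_real (mb z) * \<tau> * of_real (((Im z)^2 - (x - Re z)^2) / (Im z * Qk z x))) * Ek \<tau> z x)
      = (2 + \<tau>) / (2 * \<i> * (1 + \<tau>) * (1 + 2 * \<tau>)) * (of_real x)\<^sup>2 * (E2 (\<tau>+1) z x * W z)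
         + (- (2 * (2 + \<tau>) / (2 * \<i> * (1 + \<tau>)) * of_real x)) * (E1 (\<tau>+1) z x * W z)
         + 2 * (2 + \<tau>) / (2 * \<i>) * (Ek (\<tau>+1) z x * W z)
         + 2 * \<i> * \<tau> * (-1 + \<tau>) / (1 + 2 * \<tau>) * (of_real x)\<^sup>2 * (Ek (\<tau>-1) z x * W z)"
      unfolding E2_def E1_def Ek_plus1[OF b] Ek_minus1[OF b] W_def ma_def ma'_def mb_def mb'_def
      apply (simp only: push_simps)
      apply (unfold inv'_def[symmetric])
      using z_facts(1,3)[OF z, unfolded inv'_def[symmetric]] z_facts(2)[OF z, of x, unfolded inv'_def[symmetric]]
        z_facts(4)[OF z, of x] tau_facts[OF t1 t2, unfolded inv'_def[symmetric]] inv'_num by algebra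
  qed
  also have "\<dots> = (2 + \<tau>) / (2 * \<i> * (1 + \<tau>) * (1 + 2 * \<tau>)) * (of_real x)\<^sup>2
          * dx (dx (Tplus (fourierJ f))) \<tau> x
      - 2 * (2 + \<tau>) / (2 * \<i> * (1 + \<tau>)) * of_real x * dx (Tplus (fourierJ f)) \<tau> x
      + 2 * (2 + \<tau>) / (2 * \<i>) * Tplus (fourierJ f) \<tau> x
      + 2 * \<i> * \<tau> * (-1 + \<tau>) / (1 + 2 * \<tau>) * (of_real x)\<^sup>2 * Tminus (fourierJ f) \<tau> x"
    unfolding dx2 dx1 Tminus_def Tplus_def fJ_f
    by (subst lin4) (auto intro!: continuous_intros E2_cont E1_cont Ek_cont W_cont simp: mult_ac)
  finally show ?thesis .
qed

end


lemma smooth_cont: "smooth_on A g \<Longrightarrow> continuous_on A g"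
  by (erule smooth_on.cases) blast

lemma setup_from_Cc:
  assumes "Cc_inf_Lob f"
  shows "\<exists>Df S R. fsetup f Df S R"
proof -
  define S where "S = closure {z. f z \<noteq> 0}"
  have cS: "compact S" and SL: "S \<subseteq> Lobachevsky" using assms unfolding Cc_inf_Lob_def S_def by auto
  have sm: "smooth_on Lobachevsky f" using assms unfolding Cc_inf_Lob_def by auto
  have "\<exists>D. continuous_on Lobachevsky f \<and> (\<forall>z\<in>Lobachevsky. (f has_derivative D z) (at z))
     \<and> smooth_on Lobachevsky (\<lambda>z. D z 1) \<and> smooth_on Lobachevsky (\<lambda>z. D z \<i>)"
    using sm
  proof (cases rule: smooth_on.cases)
    case (1 D)
    then show ?thesis by blast
  qed
  then obtain D where fc: "continuous_on Lobachevsky f"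
    and fD0: "\<forall>z\<in>Lobachevsky. (f has_derivative D z) (at z)"
    and s1: "smooth_on Lobachevsky (\<lambda>z. D z 1)" and si: "smooth_on Lobachevsky (\<lambda>z. D z \<i>)"
    by blast
  have fD: "(f has_derivative D z) (at z)" if "z \<in> Lobachevsky" for z using fD0 that by blast
  have fz: "f z = 0" if "z \<notin> S" for z
    using that unfolding S_def by (meson closure_subset mem_Collect_eq subsetD)
  have clS: "closed S" using cS compact_imp_closed by blast
  have z0: "(f has_derivative (\<lambda>_. 0)) (at z)" if "z \<notin> S" for z
  proof -
    have o: "open (-S)" using clS by auto
    have m: "z \<in> -S" using that by simp
    have c: "((\<lambda>_. 0::complex) has_derivative (\<lambda>_. 0)) (at z)" by (rule has_derivative_const)
    show ?thesis by (rule has_derivative_transform_within_open[OF c o m]) (use fz in auto)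
  qed
  define Df where "Df z = (if z \<in> Lobachevsky then D z else (\<lambda>_. 0))" for z
  have fd: "(f has_derivative Df z) (at z)" for z
  proof (cases "z \<in> Lobachevsky")
    case True then show ?thesis unfolding Df_def using fD by simp
  next
    case False then have "z \<notin> S" using SL by auto
    then show ?thesis unfolding Df_def using False z0 by simp
  qed
  have Dz: "Df z v = 0" if "z \<notin> S" for z v
  proof -
    have "Df z = (\<lambda>_. 0)" using has_derivative_unique[OF fd[of z] z0[OF that]] .
    then show ?thesis by simp
  qed
  have Dc: "continuous_on UNIV (\<lambda>z. Df z v)" if "smooth_on Lobachevsky (\<lambda>z. D z v)" for v
  proof (rule cont_local[OF open_Lob clS SL])
    show "continuous_on Lobachevsky (\<lambda>z. Df z v)"
      using smooth_cont[OF that] by (rule continuous_on_eq) (simp add: Df_def)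
    show "Df z v = 0" if "z \<notin> S" for z using Dz that by simp
  qed
  obtain R where RS: "\<And>z. z \<in> S \<Longrightarrow> norm z \<le> R"
    using compact_imp_bounded[OF cS] unfolding bounded_iff by blast
  have "fsetup f Df S R"
    by (unfold_locales) (use cS SL fz fd Dc[OF s1] Dc[OF si] Dz RS in auto)
  then show ?thesis by blast
qed

theorem theorem1:
  fixes f :: "complex \<Rightarrow> complex" and \<tau> :: complex and x :: real
  assumes "Cc_inf_Lob f" and "\<tau> \<noteq> -1" and "\<tau> \<noteq> -1/2"
  shows
   "(fourierJ (\<lambda>z. f z / (z - cnj z)) \<tau> x =
      1 / (4 * \<i> * (1 + \<tau>) * (1 + 2 * \<tau>)) * dx (dx (Tplus (fourierJ f))) \<tau> x
      - 2 * \<i> * \<tau> / (2 * (1 + 2 * \<tau>)) * Tminus (fourierJ f) \<tau> x)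
   \<and> (fourierJ (\<lambda>z. wirt_z f z - wirt_zbar f z) \<tau> x =
      (2 + \<tau>) / (2 * \<i> * (1 + \<tau>) * (1 + 2 * \<tau>)) * dx (dx (Tplus (fourierJ f))) \<tau> x
      + 2 * \<i> * \<tau> * (-1 + \<tau>) / (1 + 2 * \<tau>) * Tminus (fourierJ f) \<tau> x)
   \<and> (fourierJ (\<lambda>z. z * wirt_z f z - cnj z * wirt_zbar f z) \<tau> x =
      (2 + \<tau>) / (2 * \<i> * (1 + \<tau>) * (1 + 2 * \<tau>)) * of_real x
          * dx (dx (Tplus (fourierJ f))) \<tau> x
      - (2 + \<tau>) / (2 * \<i> * (1 + \<tau>)) * dx (Tplus (fourierJ f)) \<tau> x
      + 2 * \<i> * (-1 + \<tau>) * \<tau> / (1 + 2 * \<tau>) * of_real x * Tminus (fourierJ f) \<tau> x)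
   \<and> (fourierJ (\<lambda>z. z\<^sup>2 * wirt_z f z - (cnj z)\<^sup>2 * wirt_zbar f z) \<tau> x =
      (2 + \<tau>) / (2 * \<i> * (1 + \<tau>) * (1 + 2 * \<tau>)) * (of_real x)\<^sup>2
          * dx (dx (Tplus (fourierJ f))) \<tau> x
      - 2 * (2 + \<tau>) / (2 * \<i> * (1 + \<tau>)) * of_real x * dx (Tplus (fourierJ f)) \<tau> x
      + 2 * (2 + \<tau>) / (2 * \<i>) * Tplus (fourierJ f) \<tau> x
      + 2 * \<i> * \<tau> * (-1 + \<tau>) / (1 + 2 * \<tau>) * (of_real x)\<^sup>2 * Tminus (fourierJ f) \<tau> x)"
proof -
  obtain Df S R where "fsetup f Df S R" using setup_from_Cc[OF assms(1)] by blast
  then interpret fsetup f Df S R .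
  show ?thesis by (intro conjI id1[OF assms(2,3)] id2[OF assms(2,3)] id3[OF assms(2,3)] id4[OF assms(2,3)])
qed


end
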